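(* Let $f,h$ be probability densities on $\mathbb{R}$ with finite second moments and the same first moment. Then for every $N\ge1$, \[ d_{GTW,N}(f^{\otimes N},h^{\otimes N})=d_{GTW,1}(f,h). \]
   Context: With $\hat f(\xi)=\int f(v)e^{-iv\cdot\xi}dv$, the Gabetta–Toscani–Wennberg distance on probability measures on $\mathbb{R}^k$ is $d_{GTW,k}(f,h)=\sup_{\xi\in\mathbb{R}^k\setminus\{0\}}|\hat f(\xi)-\hat h(\xi)|/|\xi|^2$. *)

theory Defs
  imports "HOL-Analysis.Analysis"
begin

definition fourier :: "('a::euclidean_space \<Rightarrow> real) \<Rightarrow> 'a \<Rightarrow> complex" where
  "fourier f \<xi> = (\<integral>v. complex_of_real (f v) * exp (- \<i> * complex_of_real (v \<bullet> \<xi>)) \<partial>lborel)"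

definition d_GTW :: "('a::euclidean_space \<Rightarrow> real) \<Rightarrow> ('a \<Rightarrow> real) \<Rightarrow> ereal" where
  "d_GTW f h = (SUP \<xi>\<in>UNIV - {0}. ereal (cmod (fourier f \<xi> - fourier h \<xi>) / (norm \<xi>)\<^sup>2))"

definition prob_density :: "('a::euclidean_space \<Rightarrow> real) \<Rightarrow> bool" where
  "prob_density f \<longleftrightarrow> f \<in> borel_measurable lborel \<and> (\<forall>x. 0 \<le> f x) \<and>
     integrable lborel f \<and> (\<integral>x. f x \<partial>lborel) = 1"

text \<open>N-fold tensor product of a density on the real line, on real^'n (N = CARD('n)).\<close>
definition tensor_pow :: "(real \<Rightarrow> real) \<Rightarrow> real^'n \<Rightarrow> real" where
  "tensor_pow f = (\<lambda>v. \<Prod>i\<in>UNIV. f (v $ i))"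

end

theory Submission
  imports Defs
begin
lemma integral_lborel_prod:
  fixes g :: "'a::euclidean_space \<Rightarrow> real \<Rightarrow> complex"
  assumes int: "\<And>b. b \<in> Basis \<Longrightarrow> integrable lborel (g b)"
  shows "(\<integral>x. (\<Prod>b\<in>Basis. g b (x \<bullet> b)) \<partial>(lborel::'a measure)) = (\<Prod>b\<in>Basis. integral\<^sup>L lborel (g b))"
proof -
  interpret product_sigma_finite "\<lambda>_::'a. lborel::real measure"
    by standard
  have meas[measurable]: "\<And>b. b \<in> Basis \<Longrightarrow> g b \<in> borel_measurable borel"
    using int by auto
  have "(\<integral>x. (\<Prod>b\<in>Basis. g b (x \<bullet> b)) \<partial>(lborel::'a measure))
     = (\<integral>x. (\<Prod>b\<in>Basis. g b (x \<bullet> b)) \<partial>(distr (\<Pi>\<^sub>M b\<in>Basis. lborel) borel (\<lambda>f. \<Sum>b\<in>Basis. f b *\<^sub>R b)))"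
    by (subst lborel_eq[where 'a='a]) (rule refl)
  also have "\<dots> = (\<integral>f. (\<Prod>b\<in>Basis. g b ((\<Sum>b\<in>Basis. f b *\<^sub>R b) \<bullet> b)) \<partial>(\<Pi>\<^sub>M b\<in>Basis. lborel))"
    by (rule integral_distr) auto
  also have "\<dots> = (\<integral>f. (\<Prod>b\<in>Basis. g b (f b)) \<partial>(\<Pi>\<^sub>M b\<in>Basis. lborel))"
    apply (rule Bochner_Integration.integral_cong[OF refl])
    apply (rule prod.cong[OF refl])
    by (simp add: inner_sum_left inner_Basis if_distrib cong: if_cong)
  also have "\<dots> = (\<Prod>b\<in>Basis. integral\<^sup>L lborel (g b))"
    by (rule product_integral_prod) (auto intro: int)
  finally show ?thesis .
qed
lemma integrable_fourier_integrand:
  assumes "integrable lborel (f::real\<Rightarrow>real)"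
  shows "integrable lborel (\<lambda>t. complex_of_real (f t) * exp (- \<i> * complex_of_real (t * c)))"
proof (rule Bochner_Integration.integrable_bound[of lborel "\<lambda>t. complex_of_real (f t)"])
  show "integrable lborel (\<lambda>t. complex_of_real (f t))" using assms by simp
  show "(\<lambda>t. complex_of_real (f t) * exp (- \<i> * complex_of_real (t * c))) \<in> borel_measurable lborel"
    using borel_measurable_integrable[OF assms] by measurable
  show "AE x in lborel. norm (complex_of_real (f x) * exp (- \<i> * complex_of_real (x * c))) \<le> norm (complex_of_real (f x))"
    by (simp add: norm_mult)
qed

lemma Basis_vec_range: "(Basis :: (real^'n) set) = range (\<lambda>i. axis i 1)"
  unfolding Basis_vec_def by auto

lemma prod_Basis_vec:
  "(\<Prod>b\<in>(Basis::(real^'n) set). G b) = (\<Prod>i\<in>UNIV. G (axis i 1))" for G :: "real^'n \<Rightarrow> complex"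
  unfolding Basis_vec_range
  by (subst prod.reindex) (auto simp: inj_on_def axis_eq_axis)

lemma fourier_tensor:
  assumes "integrable lborel f"
  shows "fourier (tensor_pow f :: real^'n \<Rightarrow> real) \<xi> = (\<Prod>i\<in>UNIV. fourier f (\<xi> $ i))"
proof -
  define g where "g b t = complex_of_real (f t) * exp (- \<i> * complex_of_real (t * (\<xi> \<bullet> b)))" for b :: "real^'n" and t
  have eq: "complex_of_real (tensor_pow f v) * exp (- \<i> * complex_of_real (v \<bullet> \<xi>))
      = (\<Prod>b\<in>Basis. g b (v \<bullet> b))" for v :: "real^'n"
  proof -
    have "(\<Prod>b\<in>Basis. g b (v \<bullet> b)) = (\<Prod>i\<in>UNIV. g (axis i 1) (v $ i))"
      by (simp add: prod_Basis_vec inner_axis)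
    also have "\<dots> = (\<Prod>i\<in>UNIV. complex_of_real (f (v$i))) * (\<Prod>i\<in>UNIV. exp (- \<i> * complex_of_real (v$i * \<xi>$i)))"
      by (simp add: g_def prod.distrib inner_axis' inner_axis)
    also have "\<dots> = complex_of_real (tensor_pow f v) * exp (- \<i> * complex_of_real (v \<bullet> \<xi>))"
      by (simp add: tensor_pow_def exp_sum[symmetric] inner_vec_def sum_distrib_left)
    finally show ?thesis by simp
  qed
  have "fourier (tensor_pow f :: real^'n \<Rightarrow> real) \<xi> = (\<integral>v. (\<Prod>b\<in>Basis. g b (v \<bullet> b)) \<partial>lborel)"
    unfolding fourier_def eq ..
  also have "\<dots> = (\<Prod>b\<in>Basis. integral\<^sup>L lborel (g b))"
    unfolding g_def by (rule integral_lborel_prod) (rule integrable_fourier_integrand[OF assms])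
  also have "\<dots> = (\<Prod>i\<in>UNIV. fourier f (\<xi> $ i))"
    by (simp add: prod_Basis_vec fourier_def g_def[abs_def] inner_axis)
  finally show ?thesis .
qed

lemma fourier_zero: "prob_density f \<Longrightarrow> fourier f 0 = 1"
  by (simp add: fourier_def prob_density_def)

lemma fourier_le1:
  assumes "prob_density f" shows "norm (fourier f t) \<le> 1"
proof -
  have "norm (fourier f t) \<le> (\<integral>v. norm (complex_of_real (f v) * exp (- \<i> * complex_of_real (v \<bullet> t))) \<partial>lborel)"
    unfolding fourier_def by (rule integral_norm_bound)
  also have "\<dots> = (\<integral>v. f v \<partial>lborel)"
    using assms by (simp add: prob_density_def norm_mult)
  also have "\<dots> = 1" using assms by (simp add: prob_density_def)
  finally show ?thesis .
qed

lemma norm_axis_real: "norm (axis i (x::real)) = \<bar>x\<bar>"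
proof -
  have "axis i x = x *\<^sub>R axis i 1" by (simp add: vec_eq_iff axis_def)
  thus ?thesis by simp
qed

lemma norm_sq_vec: "(norm (\<xi>::real^'n))\<^sup>2 = (\<Sum>i\<in>UNIV. (\<xi>$i)\<^sup>2)"
  unfolding power2_norm_eq_inner inner_vec_def by (simp add: power2_eq_square)

theorem lemma7:
  fixes f h :: "real \<Rightarrow> real"
  assumes "prob_density f" and "prob_density h"
    and "integrable lborel (\<lambda>x. x\<^sup>2 * f x)"
    and "integrable lborel (\<lambda>x. x\<^sup>2 * h x)"
    and "(\<integral>x. x * f x \<partial>lborel) = (\<integral>x. x * h x \<partial>lborel)"
  shows "d_GTW (tensor_pow f :: real^'n \<Rightarrow> real) (tensor_pow h) = d_GTW f h"
proof -
  have intf: "integrable lborel f" and inth: "integrable lborel h"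
    using assms(1,2) by (auto simp: prob_density_def)
  note FT = fourier_tensor[OF intf] fourier_tensor[OF inth]
  have f0: "fourier f 0 = 1" and h0: "fourier h 0 = 1"
    using assms(1,2) by (auto intro: fourier_zero)
  define D where "D = d_GTW f h"
  show ?thesis
  proof (rule antisym)
    show "d_GTW (tensor_pow f :: real^'n \<Rightarrow> real) (tensor_pow h) \<le> d_GTW f h"
      unfolding d_GTW_def[of "tensor_pow f :: real^'n \<Rightarrow> real"]
    proof (rule SUP_least)
      fix \<xi> :: "real^'n" assume \<xi>: "\<xi> \<in> UNIV - {0}"
      show "ereal (cmod (fourier (tensor_pow f) \<xi> - fourier (tensor_pow h) \<xi>) / (norm \<xi>)\<^sup>2) \<le> d_GTW f h"
      proof (cases "D = \<infinity>")
        case True thus ?thesis by (simp add: D_def)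
      next
        case False
        have "ereal (cmod (fourier f 1 - fourier h 1) / (norm (1::real))\<^sup>2) \<le> D"
          unfolding D_def d_GTW_def by (rule SUP_upper) auto
        hence "D \<ge> 0" by (rule order_trans[rotated]) simp
        with False obtain d where Dd: "D = ereal d" by (cases D) auto
        have bound: "cmod (fourier f t - fourier h t) \<le> d * t\<^sup>2" for t :: real
        proof (cases "t = 0")
          case True thus ?thesis by (simp add: f0 h0)
        next
          case False
          have "ereal (cmod (fourier f t - fourier h t) / (norm t)\<^sup>2) \<le> D"
            unfolding D_def d_GTW_def by (rule SUP_upper) (use False in auto)
          hence "cmod (fourier f t - fourier h t) / t\<^sup>2 \<le> d" by (simp add: Dd)
          thus ?thesis using False by (simp add: divide_le_eq mult.commute)
        qed
        have "cmod (fourier (tensor_pow f :: real^'n \<Rightarrow> real) \<xi> - fourier (tensor_pow h) \<xi>)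
            \<le> (\<Sum>i\<in>UNIV. cmod (fourier f (\<xi>$i) - fourier h (\<xi>$i)))"
          unfolding FT by (rule norm_prod_diff) (auto intro: fourier_le1 assms)
        also have "\<dots> \<le> (\<Sum>i\<in>UNIV. d * (\<xi>$i)\<^sup>2)"
          by (rule sum_mono) (rule bound)
        also have "\<dots> = d * (norm \<xi>)\<^sup>2"
          by (simp add: norm_sq_vec sum_distrib_left)
        finally have "cmod (fourier (tensor_pow f :: real^'n \<Rightarrow> real) \<xi> - fourier (tensor_pow h) \<xi>) / (norm \<xi>)\<^sup>2 \<le> d"
          using \<xi> by (simp add: divide_le_eq)
        thus ?thesis by (simp add: D_def[symmetric] Dd)
      qed
    qed
  next
    show "d_GTW f h \<le> d_GTW (tensor_pow f :: real^'n \<Rightarrow> real) (tensor_pow h)"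
      unfolding d_GTW_def[of f]
    proof (rule SUP_least)
      fix \<eta> :: real assume \<eta>: "\<eta> \<in> UNIV - {0}"
      define i0 :: 'n where "i0 = undefined"
      define \<xi> :: "real^'n" where "\<xi> = axis i0 \<eta>"
      have nx: "norm \<xi> = \<bar>\<eta>\<bar>" by (simp add: \<xi>_def norm_axis_real)
      have pf: "(\<Prod>i\<in>UNIV. fourier g (\<xi>$i)) = fourier g \<eta>" if "fourier g 0 = 1" for g
      proof -
        have "(\<Prod>i\<in>UNIV. fourier g (\<xi>$i)) = (\<Prod>i\<in>UNIV. if i = i0 then fourier g \<eta> else 1)"
          by (rule prod.cong) (auto simp: \<xi>_def axis_def that)
        thus ?thesis by simp
      qed
      have "ereal (cmod (fourier f \<eta> - fourier h \<eta>) / (norm \<eta>)\<^sup>2)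
          = ereal (cmod (fourier (tensor_pow f :: real^'n \<Rightarrow> real) \<xi> - fourier (tensor_pow h) \<xi>) / (norm \<xi>)\<^sup>2)"
        by (simp add: FT pf f0 h0 nx)
      also have "\<dots> \<le> d_GTW (tensor_pow f :: real^'n \<Rightarrow> real) (tensor_pow h)"
        unfolding d_GTW_def by (rule SUP_upper) (use \<eta> nx in auto)
      finally show "ereal (cmod (fourier f \<eta> - fourier h \<eta>) / (norm \<eta>)\<^sup>2) \<le> d_GTW (tensor_pow f :: real^'n \<Rightarrow> real) (tensor_pow h)" .
    qed
  qed
qed

end
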